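(* Let $(\mathcal A,d)$ be a DGA, let $a,b_1,\dots,b_n\in\mathcal A$ be closed with $|a|$ even and $a\wedge b_i$ exact, and let $\xi_i$ satisfy $d\xi_i=a\wedge b_i$. Fix $j\in\{1,\dots,n\}$, let $\eta_j$ be a closed element of the same degree as $\xi_j$, and set $\xi_j'=\xi_j+\eta_j$. Let $c=\sum_{i=1}^n \overline{\xi_1}\wedge\cdots\wedge\overline{\xi_{i-1}}\wedge b_i\wedge\xi_{i+1}\wedge\cdots\wedge\xi_n$ and let $c'$ be given by the same formula with $\xi_j$ replaced by $\xi_j'$. Then $$c'=c+(-1)^{(|b_j|+1)(n-j+\sum_{i>j}|b_i|)}\Big(\sum_{i=1,\,i\neq j}^n\overline{\xi_1}\wedge\cdots\wedge\widehat{\overline{\xi_j}}\wedge\cdots\wedge\overline{\xi_{i-1}}\wedge b_i\wedge\xi_{i+1}\wedge\cdots\wedge\xi_n\Big)\wedge\eta_j,$$ where $\widehat{\overline{\xi_j}}$ means that the factor $\xi_j$ is omitted.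
   Context: A DGA is a graded-commutative differential graded algebra over $\mathbb R$; $|x|$ denotes degree and $\overline{x}=(-1)^{|x|}x$. *)

theory Defs
  imports Main "HOL.Real_Vector_Spaces"
begin

text \<open>The algebra is the type 'a; the grading is given by the family of subspaces G k
  (homogeneous elements of degree k), with G k = 0 for k < 0, so the algebra is
  N-graded; d is the differential of degree +1.\<close>

definition sgnp :: "int \<Rightarrow> real" where
  "sgnp k = (-1::real) powi k"

definition dga :: "(int \<Rightarrow> 'a::real_algebra_1 set) \<Rightarrow> ('a \<Rightarrow> 'a) \<Rightarrow> bool" where
  "dga G d \<longleftrightarrow>
     (\<forall>k. 0 \<in> G k \<and> (\<forall>x\<in>G k. \<forall>y\<in>G k. x + y \<in> G k) \<and> (\<forall>c. \<forall>x\<in>G k. c *\<^sub>R x \<in> G k)) \<and>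
     (\<forall>k<0. G k = {0}) \<and>
     (\<forall>x. \<exists>!f. finite {k. f k \<noteq> 0} \<and> (\<forall>k. f k \<in> G k) \<and> x = sum f {k. f k \<noteq> 0}) \<and>
     1 \<in> G 0 \<and>
     (\<forall>k l. \<forall>x\<in>G k. \<forall>y\<in>G l. x * y \<in> G (k + l)) \<and>
     (\<forall>k l. \<forall>x\<in>G k. \<forall>y\<in>G l. x * y = sgnp (k * l) *\<^sub>R (y * x)) \<and>
     (\<forall>x y. d (x + y) = d x + d y) \<and> (\<forall>c x. d (c *\<^sub>R x) = c *\<^sub>R d x) \<and>
     (\<forall>k. \<forall>x\<in>G k. d x \<in> G (k + 1)) \<and>
     (\<forall>x. d (d x) = 0) \<and>
     (\<forall>k. \<forall>x\<in>G k. \<forall>y. d (x * y) = d x * y + sgnp k *\<^sub>R (x * d y))"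

definition obar :: "int \<Rightarrow> 'a::real_vector \<Rightarrow> 'a" where
  "obar k x = sgnp k *\<^sub>R x"

text \<open>The element c = sum_{i=1}^n obar xi_1 ... obar xi_(i-1) b_i xi_(i+1) ... xi_n,
  where dx k is the degree of xi_k.\<close>
definition cterm :: "(nat \<Rightarrow> 'a::real_algebra_1) \<Rightarrow> (nat \<Rightarrow> int) \<Rightarrow> (nat \<Rightarrow> 'a) \<Rightarrow> nat \<Rightarrow> 'a" where
  "cterm xi dx b n = (\<Sum>i=1..n.
      prod_list (map (\<lambda>k. obar (dx k) (xi k)) [1..<i]) * b i * prod_list (map xi [Suc i..<Suc n]))"

definition cterm_omit :: "(nat \<Rightarrow> 'a::real_algebra_1) \<Rightarrow> (nat \<Rightarrow> int) \<Rightarrow> (nat \<Rightarrow> 'a) \<Rightarrow> nat \<Rightarrow> nat \<Rightarrow> 'a" where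
  "cterm_omit xi dx b n j = (\<Sum>i\<in>{1..n} - {j}.
      prod_list (map (\<lambda>k. obar (dx k) (xi k)) (filter (\<lambda>k. k \<noteq> j) [1..<i])) * b i *
      prod_list (map xi (filter (\<lambda>k. k \<noteq> j) [Suc i..<Suc n])))"

end

theory Submission
  imports Defs
begin

lemma sgnp_add: "sgnp (a + b) = sgnp a * sgnp b"
  unfolding sgnp_def by (simp add: power_int_add)

lemma sgnp_even: assumes "even (k - l)" shows "sgnp k = sgnp l"
proof -
  obtain m where "k - l = 2 * m" using assms evenE by blast
  then have "k = l + 2 * m" by simp
  then have "sgnp k = sgnp l * sgnp (2 * m)" by (simp add: sgnp_add)
  moreover have "sgnp (2 * m) = 1" unfolding sgnp_def by (simp add: power_int_mult)
  ultimately show ?thesis by simp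
qed

lemma dga_mul: "dga G d \<Longrightarrow> x \<in> G k \<Longrightarrow> y \<in> G l \<Longrightarrow> x * y \<in> G (k + l)"
  unfolding dga_def by blast
lemma dga_comm: "dga G d \<Longrightarrow> x \<in> G k \<Longrightarrow> y \<in> G l \<Longrightarrow> x * y = sgnp (k * l) *\<^sub>R (y * x)"
  unfolding dga_def by blast
lemma dga_scale: "dga G d \<Longrightarrow> x \<in> G k \<Longrightarrow> c *\<^sub>R x \<in> G k"
  unfolding dga_def by auto
lemma dga_one: "dga G d \<Longrightarrow> 1 \<in> G 0"
  unfolding dga_def by blast

lemma dga_prod: "dga G d \<Longrightarrow> \<forall>k\<in>set ks. f k \<in> G (g k) \<Longrightarrow>
   prod_list (map f ks) \<in> G (sum_list (map g ks))"
  by (induction ks) (auto intro: dga_one dga_mul)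

lemma dga_move: assumes D: "dga G d" and E: "eta \<in> G e"
  shows "\<forall>k\<in>set ks. f k \<in> G (g k) \<Longrightarrow>
   eta * prod_list (map f ks) = sgnp (e * sum_list (map g ks)) *\<^sub>R (prod_list (map f ks) * eta)"
proof (induction ks)
  case Nil
  then show ?case by (simp add: sgnp_def)
next
  case (Cons a ks)
  let ?P = "prod_list (map f ks)" and ?s = "sum_list (map g ks)"
  have fa: "f a \<in> G (g a)" using Cons by simp
  have IH: "eta * ?P = sgnp (e * ?s) *\<^sub>R (?P * eta)" using Cons by simp
  have "eta * prod_list (map f (a # ks)) = (eta * f a) * ?P" by (simp add: mult.assoc)
  also have "\<dots> = (sgnp (e * g a) *\<^sub>R (f a * eta)) * ?P" using dga_comm[OF D E fa] by simp
  also have "\<dots> = sgnp (e * g a) *\<^sub>R (f a * (eta * ?P))" by (simp add: mult.assoc)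
  also have "\<dots> = (sgnp (e * g a) * sgnp (e * ?s)) *\<^sub>R (f a * ?P * eta)"
    using IH by (simp add: mult.assoc)
  also have "sgnp (e * g a) * sgnp (e * ?s) = sgnp (e * sum_list (map g (a # ks)))"
    by (simp add: sgnp_add distrib_left)
  finally show ?case by simp
qed

lemma upt_split: "a \<le> j \<Longrightarrow> j < b \<Longrightarrow> [a..<b] = [a..<j] @ j # [Suc j..<b]"
proof -
  assume h: "a \<le> j" "j < b"
  have "[a..<j + (b - j)] = [a..<j] @ [j..<j + (b - j)]" using h(1) by (rule upt_add_eq_append)
  moreover have "j + (b - j) = b" using h(2) by simp
  ultimately have "[a..<b] = [a..<j] @ [j..<b]" by simp
  then show ?thesis using upt_conv_Cons[OF h(2)] by simp
qed

lemma prod_split: "a \<le> j \<Longrightarrow> j < b \<Longrightarrow>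
  prod_list (map f [a..<b]) = prod_list (map f [a..<j]) * (f j * prod_list (map f [Suc j..<b]))"
  unfolding upt_split[of a j b] by simp

theorem lemma2p6:
  fixes G :: "int \<Rightarrow> 'a::real_algebra_1 set" and d :: "'a \<Rightarrow> 'a"
    and a :: 'a and da :: int and b xi :: "nat \<Rightarrow> 'a" and db :: "nat \<Rightarrow> int"
    and n j :: nat and eta :: 'a
  assumes "dga G d"
    and "a \<in> G da" and "even da" and "d a = 0"
    and "\<And>i. i \<in> {1..n} \<Longrightarrow> b i \<in> G (db i) \<and> d (b i) = 0"
    and "\<And>i. i \<in> {1..n} \<Longrightarrow> \<exists>x. d x = a * b i"
    and "\<And>i. i \<in> {1..n} \<Longrightarrow> xi i \<in> G (da + db i - 1) \<and> d (xi i) = a * b i"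
    and "j \<in> {1..n}"
    and "eta \<in> G (da + db j - 1)" and "d eta = 0"
  shows "cterm (xi(j := xi j + eta)) (\<lambda>i. da + db i - 1) b n =
           cterm xi (\<lambda>i. da + db i - 1) b n +
           sgnp ((db j + 1) * (int n - int j + (\<Sum>i\<in>{j<..n}. db i))) *\<^sub>R
             (cterm_omit xi (\<lambda>i. da + db i - 1) b n j * eta)"
proof -
  note D = assms(1)
  define e where "e = (\<lambda>i. da + db i - 1)"
  define ob where "ob = (\<lambda>k. obar (e k) (xi k))"
  define xi' where "xi' = xi(j := xi j + eta)"
  define ob' where "ob' = (\<lambda>k. obar (e k) (xi' k))"
  define \<sigma> where "\<sigma> = sgnp (e j * sum_list (map e [Suc j..<Suc n]))"
  define Om where "Om = (\<lambda>i. prod_list (map ob (filter (\<lambda>k. k \<noteq> j) [1..<i])) * b i *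
      prod_list (map xi (filter (\<lambda>k. k \<noteq> j) [Suc i..<Suc n])))"
  have jn: "1 \<le> j" "j \<le> n" using assms(8) by auto
  have Gxi: "\<And>k. k \<in> {1..n} \<Longrightarrow> xi k \<in> G (e k)" using assms(7) e_def by auto
  have Gob: "\<And>k. k \<in> {1..n} \<Longrightarrow> ob k \<in> G (e k)"
    unfolding ob_def obar_def using Gxi dga_scale[OF D] by blast
  have Gb: "\<And>k. k \<in> {1..n} \<Longrightarrow> b k \<in> G (db k)" using assms(5) by auto
  have Geta: "eta \<in> G (e j)" using assms(9) e_def by simp
  obtain m where m: "da = 2 * m" using assms(3) by (auto elim: evenE)
  have sig: "sgnp ((db j + 1) * (int n - int j + (\<Sum>i\<in>{j<..n}. db i))) = \<sigma>"
  proof -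
    have st: "set [Suc j..<Suc n] = {j<..n}" by auto
    have "sum_list (map e [Suc j..<Suc n]) = (\<Sum>k\<in>{j<..n}. (da - 1) + db k)"
      unfolding interv_sum_list_conv_sum_set_nat st e_def by (simp add: algebra_simps)
    also have "\<dots> = (int n - int j) * (da - 1) + (\<Sum>k\<in>{j<..n}. db k)"
      using jn by (simp add: sum.distrib of_nat_diff)
    finally have se: "sum_list (map e [Suc j..<Suc n]) = (int n - int j) * (da - 1) + (\<Sum>k\<in>{j<..n}. db k)" .
    define c where "c = int n - int j"
    define S where "S = (\<Sum>k\<in>{j<..n}. db k)"
    have "(da + db j - 1) * (c * (da - 1) + S) - (db j + 1) * (c + S)
       = 2 * (m * c * (2 * m + db j - 1) + m * (S - c) - db j * c - S)"
      unfolding m by (simp add: algebra_simps)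
    then have ev0: "even ((da + db j - 1) * (c * (da - 1) + S) - (db j + 1) * (c + S))"
      by (simp only:) simp
    note ev = ev0[unfolded c_def S_def]
    show ?thesis unfolding \<sigma>_def se unfolding e_def
      by (rule sgnp_even[OF ev, symmetric])
  qed
  have key: "\<And>i. i \<in> {1..n} \<Longrightarrow>
     prod_list (map ob' [1..<i]) * b i * prod_list (map xi' [Suc i..<Suc n]) =
     prod_list (map ob [1..<i]) * b i * prod_list (map xi [Suc i..<Suc n]) +
     (if i = j then 0 else \<sigma> *\<^sub>R (Om i * eta))"
  proof -
    fix i assume i: "i \<in> {1..n}"
    have ob'_eq: "\<And>k. k \<noteq> j \<Longrightarrow> ob' k = ob k" unfolding ob'_def ob_def xi'_def by simp
    have xi'_eq: "\<And>k. k \<noteq> j \<Longrightarrow> xi' k = xi k" unfolding xi'_def by simp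
    have ob'_j: "ob' j = ob j + sgnp (e j) *\<^sub>R eta"
      unfolding ob'_def ob_def xi'_def obar_def by (simp add: scaleR_add_right)
    consider "i = j" | "i < j" | "j < i" by linarith
    then show "?thesis i"
    proof cases
      case 1
      have e1: "map ob' [1..<i] = map ob [1..<i]" using 1 by (intro map_cong) (auto intro: ob'_eq)
      have e2: "map xi' [Suc i..<Suc n] = map xi [Suc i..<Suc n]"
        using 1 by (intro map_cong) (auto intro: xi'_eq)
      show ?thesis unfolding e1 e2 using 1 by simp
    next
      case 2
      have h1: "map ob' [1..<i] = map ob [1..<i]" using 2 by (intro map_cong) (auto intro: ob'_eq)
      have sp: "[Suc i..<Suc n] = [Suc i..<j] @ j # [Suc j..<Suc n]"
        using 2 jn by (intro upt_split) auto
      define P1 where "P1 = prod_list (map xi [Suc i..<j])"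
      define P2 where "P2 = prod_list (map xi [Suc j..<Suc n])"
      define Q where "Q = prod_list (map ob [1..<i])"
      have m1: "map xi' [Suc i..<j] = map xi [Suc i..<j]" by (intro map_cong) (auto intro: xi'_eq)
      have m2: "map xi' [Suc j..<Suc n] = map xi [Suc j..<Suc n]" by (intro map_cong) (auto intro: xi'_eq)
      have hxi': "prod_list (map xi' [Suc i..<Suc n]) = P1 * ((xi j + eta) * P2)"
        unfolding sp P1_def P2_def by (simp add: m1 m2 xi'_def)
      have hxi: "prod_list (map xi [Suc i..<Suc n]) = P1 * (xi j * P2)"
        unfolding sp P1_def P2_def by simp
      have f1: "filter (\<lambda>k. k \<noteq> j) [1..<i] = [1..<i]" using 2 by (auto intro: filter_True)
      have f2: "filter (\<lambda>k. k \<noteq> j) [Suc i..<Suc n] = [Suc i..<j] @ [Suc j..<Suc n]"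
        unfolding sp by (auto intro: filter_True)
      have hOm: "Om i = Q * b i * (P1 * P2)" unfolding Om_def f1 f2 Q_def P1_def P2_def by simp
      have mv: "eta * P2 = \<sigma> *\<^sub>R (P2 * eta)" unfolding P2_def \<sigma>_def
        by (rule dga_move[OF D Geta]) (use Gxi in auto)
      show ?thesis unfolding h1 hxi' hxi hOm Q_def[symmetric] using 2
        by (simp add: distrib_left distrib_right mv mult.assoc)
    next
      case 3
      have sp: "[1..<i] = [1..<j] @ j # [Suc j..<i]" using 3 jn by (intro upt_split) auto
      define Q1 where "Q1 = prod_list (map ob [1..<j])"
      define Q2 where "Q2 = prod_list (map ob [Suc j..<i])"
      define S where "S = prod_list (map xi [Suc i..<Suc n])"
      have m1: "map ob' [1..<j] = map ob [1..<j]" by (intro map_cong) (auto intro: ob'_eq)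
      have m2: "map ob' [Suc j..<i] = map ob [Suc j..<i]" by (intro map_cong) (auto intro: ob'_eq)
      have hob': "prod_list (map ob' [1..<i]) = Q1 * ((ob j + sgnp (e j) *\<^sub>R eta) * Q2)"
        unfolding prod_split[OF jn(1) 3, of ob'] m1 m2 ob'_j Q1_def Q2_def by (rule refl)
      have hob: "prod_list (map ob [1..<i]) = Q1 * (ob j * Q2)"
        unfolding prod_split[OF jn(1) 3, of ob] Q1_def Q2_def by (rule refl)
      have hxi': "map xi' [Suc i..<Suc n] = map xi [Suc i..<Suc n]"
        using 3 by (intro map_cong) (auto intro: xi'_eq)
      have f1: "filter (\<lambda>k. k \<noteq> j) [1..<i] = [1..<j] @ [Suc j..<i]"
        unfolding sp by (auto intro: filter_True)
      have f2: "filter (\<lambda>k. k \<noteq> j) [Suc i..<Suc n] = [Suc i..<Suc n]"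
        using 3 by (auto intro: filter_True)
      have hOm: "Om i = Q1 * Q2 * b i * S" unfolding Om_def f1 f2 Q1_def Q2_def S_def by simp
      define s2 where "s2 = sgnp (e j * sum_list (map e [Suc j..<i]))"
      define sb where "sb = sgnp (e j * db i)"
      define s3 where "s3 = sgnp (e j * sum_list (map e [Suc i..<Suc n]))"
      have mv2: "eta * Q2 = s2 *\<^sub>R (Q2 * eta)" unfolding Q2_def s2_def
        by (rule dga_move[OF D Geta]) (use Gob 3 i in auto)
      have mvb: "eta * b i = sb *\<^sub>R (b i * eta)" unfolding sb_def
        by (rule dga_comm[OF D Geta Gb[OF i]])
      have mv3: "eta * S = s3 *\<^sub>R (S * eta)" unfolding S_def s3_def
        by (rule dga_move[OF D Geta]) (use Gxi 3 i in auto)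
      have ch: "eta * (Q2 * (b i * S)) = (s2 * (sb * s3)) *\<^sub>R (Q2 * (b i * S) * eta)"
      proof -
        have "eta * (b i * S) = (sb * s3) *\<^sub>R (b i * S * eta)"
          using mvb mv3 by (simp add: mult.assoc[symmetric]) (simp add: mult.assoc)
        then show ?thesis using mv2 by (simp add: mult.assoc[symmetric]) (simp add: mult.assoc)
      qed
      have sp2: "[Suc j..<Suc n] = [Suc j..<i] @ i # [Suc i..<Suc n]" using 3 i by (intro upt_split) auto
      have sg: "sgnp (e j) * (s2 * (sb * s3)) = \<sigma>"
      proof -
        define A where "A = sum_list (map e [Suc j..<i])"
        define B where "B = sum_list (map e [Suc i..<Suc n])"
        have l: "sgnp (e j) * (s2 * (sb * s3)) = sgnp (e j + (e j * A + (e j * db i + e j * B)))"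
          unfolding s2_def sb_def s3_def A_def[symmetric] B_def[symmetric] by (simp add: sgnp_add)
        have r: "\<sigma> = sgnp (e j * (A + (e i + B)))" unfolding \<sigma>_def sp2 A_def B_def by simp
        have "e j * (A + (e i + B)) - (e j + (e j * A + (e j * db i + e j * B))) = 2 * (e j * (m - 1))"
          unfolding e_def m by (simp add: algebra_simps)
        then have "even (e j * (A + (e i + B)) - (e j + (e j * A + (e j * db i + e j * B))))"
          by (simp only:) simp
        then show ?thesis unfolding l r by (rule sgnp_even[symmetric])
      qed
      have "prod_list (map ob' [1..<i]) * b i * prod_list (map xi' [Suc i..<Suc n])
          = Q1 * ((ob j + sgnp (e j) *\<^sub>R eta) * Q2) * b i * S"
        unfolding hob' hxi' S_def ..
      also have "\<dots> = Q1 * (ob j * Q2) * b i * S + sgnp (e j) *\<^sub>R (Q1 * (eta * (Q2 * (b i * S))))"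
        by (simp add: distrib_left distrib_right mult.assoc)
      also have "\<dots> = Q1 * (ob j * Q2) * b i * S + \<sigma> *\<^sub>R (Om i * eta)"
        unfolding ch hOm sg[symmetric] by (simp add: mult.assoc)
      finally show ?thesis using 3 unfolding hob S_def by simp
    qed
  qed
  have "cterm xi' e b n = (\<Sum>i=1..n. prod_list (map ob [1..<i]) * b i * prod_list (map xi [Suc i..<Suc n]) +
     (if i = j then 0 else \<sigma> *\<^sub>R (Om i * eta)))"
    unfolding cterm_def ob'_def[symmetric] by (rule sum.cong[OF refl], rule key)
  also have "\<dots> = cterm xi e b n + (\<Sum>i=1..n. (if i = j then 0 else \<sigma> *\<^sub>R (Om i * eta)))"
    unfolding cterm_def ob_def[symmetric] by (simp add: sum.distrib)
  also have "(\<Sum>i=1..n. (if i = j then 0 else \<sigma> *\<^sub>R (Om i * eta))) = (\<Sum>i\<in>{1..n}-{j}. \<sigma> *\<^sub>R (Om i * eta))"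
    by (rule sum.mono_neutral_cong_right) auto
  also have "(\<Sum>i\<in>{1..n}-{j}. \<sigma> *\<^sub>R (Om i * eta)) = \<sigma> *\<^sub>R (cterm_omit xi e b n j * eta)"
    unfolding cterm_omit_def ob_def[symmetric] Om_def
    by (simp add: scaleR_sum_right sum_distrib_right)
  finally have fin: "cterm xi' e b n = cterm xi e b n + \<sigma> *\<^sub>R (cterm_omit xi e b n j * eta)" .
  from fin[unfolded xi'_def e_def] show ?thesis unfolding sig .
qed

end
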